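(* For each $i\in\{1,2,3,4\}$, the minimal polynomial of $\mathcal{M}_i^{-1}\mathcal{A}$ has degree at most $n+q+1$.
   Context: Let $A_1\in\mathbb{R}^{p\times n}$ have full column rank and $A_2\in\mathbb{R}^{q\times n}$. Set $P=A_1^TA_1$, and let $\hat P\in\mathbb{R}^{n\times n}$ be symmetric positive definite. Define $\mathcal{A}=\begin{pmatrix}I_p&A_1&0\\0&P&A_2^T\\0&A_2&I_q\end{pmatrix}$, $\mathcal{M}_1=\begin{pmatrix}I_p&0&0\\0&\hat P&0\\0&0&I_q\end{pmatrix}$, $\mathcal{M}_2=\begin{pmatrix}I_p&0&0\\0&\hat P&A_2^T\\0&0&I_q\end{pmatrix}$, $\mathcal{M}_3=\begin{pmatrix}I_p&A_1&0\\0&\hat P&0\\0&0&I_q\end{pmatrix}$, $\mathcal{M}_4=\begin{pmatrix}I_p&A_1&0\\0&\hat P&A_2^T\\0&0&I_q\end{pmatrix}$. *)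

theory Defs
  imports "Jordan_Normal_Form.Matrix" "Jordan_Normal_Form.DL_Rank"
    "HOL-Computational_Algebra.Polynomial"
begin

definition poly_mat :: "real poly \<Rightarrow> real mat \<Rightarrow> real mat" where
  "poly_mat f M = mat (dim_row M) (dim_col M)
     (\<lambda>(i,j). \<Sum>k\<le>degree f. coeff f k * (M ^\<^sub>m k) $$ (i,j))"

definition min_poly_mat :: "real mat \<Rightarrow> real poly" where
  "min_poly_mat M = (THE f. lead_coeff f = 1 \<and> poly_mat f M = 0\<^sub>m (dim_row M) (dim_row M) \<and>
      (\<forall>g. g \<noteq> 0 \<and> poly_mat g M = 0\<^sub>m (dim_row M) (dim_row M) \<longrightarrow> degree f \<le> degree g))"

definition inv_mat :: "real mat \<Rightarrow> real mat" where
  "inv_mat M = (SOME B. B \<in> carrier_mat (dim_row M) (dim_row M) \<and> inverts_mat M B \<and> inverts_mat B M)"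

definition sym_pos_def_mat :: "nat \<Rightarrow> real mat \<Rightarrow> bool" where
  "sym_pos_def_mat n P \<longleftrightarrow> P \<in> carrier_mat n n \<and> transpose_mat P = P \<and>
     (\<forall>x \<in> carrier_vec n. x \<noteq> 0\<^sub>v n \<longrightarrow> x \<bullet> (P *\<^sub>v x) > 0)"

text \<open>3x3 block matrix with row/column block sizes (r1,r2,r3) and (c1,c2,c3).\<close>
definition block3 :: "real mat \<Rightarrow> real mat \<Rightarrow> real mat \<Rightarrow> real mat \<Rightarrow> real mat \<Rightarrow> real mat
   \<Rightarrow> real mat \<Rightarrow> real mat \<Rightarrow> real mat \<Rightarrow> real mat" where
  "block3 B11 B12 B13 B21 B22 B23 B31 B32 B33 =
     four_block_mat B11 (four_block_mat B12 B13 (0\<^sub>m 0 (dim_col B12)) (0\<^sub>m 0 (dim_col B13)))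
       (four_block_mat B21 (0\<^sub>m (dim_row B21) 0) B31 (0\<^sub>m (dim_row B31) 0))
       (four_block_mat B22 B23 B32 B33)"

end

theory Submission imports Defs "Jordan_Normal_Form.Char_Poly" begin

lemma sum_extend_atMost:
  fixes f :: "nat \<Rightarrow> 'a::comm_monoid_add"
  assumes "D1 \<le> D2" "\<And>k. D1 < k \<Longrightarrow> f k = 0"
  shows "(\<Sum>k\<le>D1. f k) = (\<Sum>k\<le>D2. f k)"
  by (rule sum.mono_neutral_left) (use assms in auto)

lemma char_poly_matrix_entry:
  assumes Z: "Z \<in> carrier_mat m m" and a: "a < m" and l: "l < m"
  shows "char_poly_matrix Z $$ (a,l) = (if a = l then [:0,1:] else 0) + [: - Z $$ (a,l) :]"
  using Z a l unfolding char_poly_matrix_def by auto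

lemma coeff_char_entry_mult:
  fixes P :: "'a::comm_ring_1 poly"
  shows "coeff (((if a = l then [:0,1:] else 0) + [: - z :]) * P) k =
     (if a = l then (if k = 0 then 0 else coeff P (k - 1)) else 0) - z * coeff P k"
  by (cases k) (auto simp: algebra_simps coeff_pCons)

lemma cayley_hamilton_entry:
  fixes Z :: "real mat"
  assumes Z: "Z \<in> carrier_mat m m" and i: "i < m" and j: "j < m"
  shows "(\<Sum>k\<le>m. coeff (char_poly Z) k * (Z ^\<^sub>m k) $$ (i,j)) = 0"
proof -
  define C where "C = char_poly_matrix Z"
  define Adj where "Adj = adj_mat C"
  define \<chi> where "\<chi> = char_poly Z"
  have C: "C \<in> carrier_mat m m" unfolding C_def using Z by simp
  have Adj: "Adj \<in> carrier_mat m m" unfolding Adj_def using adj_mat(1)[OF C] .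
  have CA: "C * Adj = \<chi> \<cdot>\<^sub>m 1\<^sub>m m" unfolding Adj_def \<chi>_def char_poly_def C_def[symmetric]
    using adj_mat(2)[OF C] .
  define B where "B k = mat m m (\<lambda>(a,b). coeff (Adj $$ (a,b)) k)" for k
  define Bp where "Bp k = (if k = 0 then 0\<^sub>m m m else B (k - 1))" for k
  have B: "B k \<in> carrier_mat m m" for k unfolding B_def by simp
  have Bp: "Bp k \<in> carrier_mat m m" for k unfolding Bp_def using B by simp
  have key: "Bp k - Z * B k = coeff \<chi> k \<cdot>\<^sub>m 1\<^sub>m m" for k
  proof (rule eq_matI)
    fix a b assume a: "a < dim_row (coeff \<chi> k \<cdot>\<^sub>m 1\<^sub>m m)" and b: "b < dim_col (coeff \<chi> k \<cdot>\<^sub>m 1\<^sub>m m)"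
    hence a: "a < m" and b: "b < m" by auto
    have "(C * Adj) $$ (a,b) = (\<Sum>l<m. C $$ (a,l) * Adj $$ (l,b))"
      using C Adj a b by (auto simp: scalar_prod_def atLeast0LessThan intro!: sum.cong)
    hence "coeff ((C * Adj) $$ (a,b)) k = (\<Sum>l<m. coeff (C $$ (a,l) * Adj $$ (l,b)) k)"
      by (simp add: coeff_sum)
    also have "\<dots> = (\<Sum>l<m. (if a = l then (if k = 0 then 0 else coeff (Adj $$ (l,b)) (k - 1)) else 0)
        - Z $$ (a,l) * coeff (Adj $$ (l,b)) k)"
      by (rule sum.cong[OF refl], unfold C_def, subst char_poly_matrix_entry[OF Z a], simp,
          rule coeff_char_entry_mult)
    also have "\<dots> = Bp k $$ (a,b) - (Z * B k) $$ (a,b)"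
      using a b Z B by (auto simp: sum_subtractf Bp_def B_def scalar_prod_def atLeast0LessThan
          intro!: sum.cong)
    finally have "coeff ((C * Adj) $$ (a,b)) k = Bp k $$ (a,b) - (Z * B k) $$ (a,b)" .
    moreover have "coeff ((C * Adj) $$ (a,b)) k = (coeff \<chi> k \<cdot>\<^sub>m 1\<^sub>m m) $$ (a,b)"
      unfolding CA using a b by auto
    ultimately show "(Bp k - Z * B k) $$ (a, b) = (coeff \<chi> k \<cdot>\<^sub>m 1\<^sub>m m) $$ (a, b)"
      using a b Z B[of k] Bp[of k] by (simp add: index_minus_mat)
  qed (use Z B Bp in auto)
  define F where "F k = (Z ^\<^sub>m k * Bp k) $$ (i,j)" for k
  have step: "coeff \<chi> k * (Z ^\<^sub>m k) $$ (i,j) = F k - F (Suc k)" for k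
  proof -
    have Zk: "Z ^\<^sub>m k \<in> carrier_mat m m" using Z by simp
    have "coeff \<chi> k \<cdot>\<^sub>m (Z ^\<^sub>m k) = Z ^\<^sub>m k * (coeff \<chi> k \<cdot>\<^sub>m 1\<^sub>m m)"
      using mult_smult_distrib[OF Zk one_carrier_mat, of "coeff \<chi> k"] Zk right_mult_one_mat[OF Zk] by simp
    also have "\<dots> = Z ^\<^sub>m k * (Bp k - Z * B k)" by (simp add: key)
    also have "\<dots> = Z ^\<^sub>m k * Bp k - Z ^\<^sub>m k * (Z * B k)"
      using Zk Z B Bp by (intro mult_minus_distrib_mat[OF Zk]) auto
    also have "Z ^\<^sub>m k * (Z * B k) = Z ^\<^sub>m (Suc k) * Bp (Suc k)"
      using Zk Z B by (simp add: Bp_def assoc_mult_mat[OF Zk Z B, symmetric])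
    finally have "coeff \<chi> k \<cdot>\<^sub>m (Z ^\<^sub>m k) = Z ^\<^sub>m k * Bp k - Z ^\<^sub>m (Suc k) * Bp (Suc k)" .
    hence "(coeff \<chi> k \<cdot>\<^sub>m (Z ^\<^sub>m k)) $$ (i,j) = (Z ^\<^sub>m k * Bp k - Z ^\<^sub>m (Suc k) * Bp (Suc k)) $$ (i,j)"
      by simp
    also have "\<dots> = (Z ^\<^sub>m k * Bp k) $$ (i,j) - (Z ^\<^sub>m (Suc k) * Bp (Suc k)) $$ (i,j)"
      by (rule index_minus_mat) (use i j Z Bp[of "Suc k"] in \<open>auto simp del: pow_mat.simps\<close>)
    finally show ?thesis using Zk Z i j unfolding F_def by simp
  qed
  define S where "S = (\<Sum>a<m. \<Sum>b<m. degree (Adj $$ (a,b)))"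
  define D where "D = m + S + 1"
  have BD: "B D = 0\<^sub>m m m"
  proof (rule eq_matI)
    fix a b assume "a < dim_row (0\<^sub>m m m :: real mat)" "b < dim_col (0\<^sub>m m m :: real mat)"
    hence a: "a < m" and b: "b < m" by auto
    have "degree (Adj $$ (a,b)) \<le> (\<Sum>b<m. degree (Adj $$ (a,b)))"
      using b by (intro member_le_sum) auto
    also have "\<dots> \<le> S" unfolding S_def using a
      by (intro member_le_sum[where f = "\<lambda>a. \<Sum>b<m. degree (Adj $$ (a,b))"]) auto
    finally have "degree (Adj $$ (a,b)) < D" unfolding D_def by simp
    thus "B D $$ (a,b) = 0\<^sub>m m m $$ (a,b)" using a b unfolding B_def by (simp add: coeff_eq_0)
  qed (auto simp: B_def)
  have "(\<Sum>k\<le>m. coeff \<chi> k * (Z ^\<^sub>m k) $$ (i,j)) = (\<Sum>k\<le>D. coeff \<chi> k * (Z ^\<^sub>m k) $$ (i,j))"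
    by (rule sum_extend_atMost) (use degree_monic_char_poly[OF Z] in \<open>auto simp: D_def \<chi>_def coeff_eq_0\<close>)
  also have "\<dots> = (\<Sum>k\<le>D. F k - F (Suc k))" by (simp add: step)
  also have "\<dots> = F 0 - F (Suc D)" by (rule sum_telescope)
  also have "F 0 = 0" unfolding F_def Bp_def using i j Z by simp
  also have "F (Suc D) = 0" unfolding F_def Bp_def using i j Z BD by simp
  finally show ?thesis unfolding \<chi>_def by simp
qed


lemma mult_entry:
  assumes "A \<in> carrier_mat n k" "B \<in> carrier_mat k nc" "i < n" "j < nc"
  shows "(A * B) $$ (i,j) = (\<Sum>l<k. A $$ (i,l) * B $$ (l,j))"
  using assms by (auto simp: scalar_prod_def atLeast0LessThan intro!: sum.cong)

lemma pow_mat_Suc_left: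
  assumes "A \<in> carrier_mat n n"
  shows "A ^\<^sub>m (Suc k) = A * A ^\<^sub>m k"
proof (induct k)
  case 0 then show ?case using assms by simp
next
  case (Suc k)
  have "A ^\<^sub>m Suc (Suc k) = A ^\<^sub>m (Suc k) * A" by simp
  also have "\<dots> = A * A ^\<^sub>m k * A" using Suc by simp
  also have "\<dots> = A * (A ^\<^sub>m k * A)" using assms by (intro assoc_mult_mat) auto
  finally show ?case by simp
qed

lemma sum_split_add:
  fixes f :: "nat \<Rightarrow> 'a::comm_monoid_add"
  shows "(\<Sum>l<p+m. f l) = (\<Sum>l<p. f l) + (\<Sum>l<m. f (l+p))"
  by (induct m) (auto simp: add.commute add.left_commute)

lemma poly_mat_entry:
  assumes "i < dim_row M" "j < dim_col M" "degree f \<le> D"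
  shows "poly_mat f M $$ (i,j) = (\<Sum>k\<le>D. coeff f k * (M ^\<^sub>m k) $$ (i,j))"
  unfolding poly_mat_def using assms
  by (simp, intro sum_extend_atMost) (auto simp: coeff_eq_0)

lemma poly_mat_zero_iff:
  assumes M: "M \<in> carrier_mat N N" and D: "degree f \<le> D"
  shows "poly_mat f M = 0\<^sub>m N N \<longleftrightarrow>
    (\<forall>i<N. \<forall>j<N. (\<Sum>k\<le>D. coeff f k * (M ^\<^sub>m k) $$ (i,j)) = 0)"
proof -
  have dims: "dim_row (poly_mat f M) = N" "dim_col (poly_mat f M) = N"
    using M unfolding poly_mat_def by auto
  show ?thesis
  proof
    assume "poly_mat f M = 0\<^sub>m N N"
    thus "\<forall>i<N. \<forall>j<N. (\<Sum>k\<le>D. coeff f k * (M ^\<^sub>m k) $$ (i,j)) = 0"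
      using poly_mat_entry[OF _ _ D, of _ M] M by (metis carrier_matD index_zero_mat(1))
  next
    assume "\<forall>i<N. \<forall>j<N. (\<Sum>k\<le>D. coeff f k * (M ^\<^sub>m k) $$ (i,j)) = 0"
    thus "poly_mat f M = 0\<^sub>m N N"
      using poly_mat_entry[OF _ _ D, of _ M] M dims by (intro eq_matI) auto
  qed
qed

lemma block_annihilator:
  fixes T :: "real mat"
  assumes T: "T \<in> carrier_mat (p+m) (p+m)"
    and col: "\<And>i j. i < p+m \<Longrightarrow> j < p \<Longrightarrow> T $$ (i,j) = (if i = j then 1 else 0)"
  shows "\<exists>g. g \<noteq> 0 \<and> degree g \<le> m + 1 \<and> poly_mat g T = 0\<^sub>m (p+m) (p+m)"
proof -
  define N where "N = p + m"
  have TN: "T \<in> carrier_mat N N" using T unfolding N_def .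
  define Z where "Z = mat m m (\<lambda>(a,b). T $$ (a+p, b+p))"
  have Z: "Z \<in> carrier_mat m m" unfolding Z_def by simp
  define \<chi> where "\<chi> = char_poly Z"
  have degchi: "degree \<chi> = m" "coeff \<chi> m = 1" using degree_monic_char_poly[OF Z] unfolding \<chi>_def by auto
  have Tk_col: "(T ^\<^sub>m k) $$ (i,j) = (if i = j then 1 else 0)" if "i < N" "j < p" for i j k
    using that
  proof (induct k arbitrary: i)
    case 0 then show ?case using TN by (simp add: N_def)
  next
    case (Suc k)
    have "(T ^\<^sub>m Suc k) $$ (i,j) = (T ^\<^sub>m k * T) $$ (i,j)" by simp
    also have "\<dots> = (\<Sum>l<N. (T ^\<^sub>m k) $$ (i,l) * T $$ (l,j))"
      using TN Suc.prems N_def by (intro mult_entry[where nc=N]) auto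
    also have "\<dots> = (\<Sum>l<N. (T ^\<^sub>m k) $$ (i,l) * (if l = j then 1 else 0))"
      using col Suc.prems N_def by (intro sum.cong) auto
    also have "\<dots> = (T ^\<^sub>m k) $$ (i,j)" using Suc.prems N_def by (simp add: if_distrib cong: if_cong)
    finally show ?case using Suc by simp
  qed
  have Tk_Z: "(T ^\<^sub>m k) $$ (a+p,b+p) = (Z ^\<^sub>m k) $$ (a,b)" if "a < m" "b < m" for a b k
    using that
  proof (induct k arbitrary: a b)
    case 0 then show ?case using TN Z by (simp add: N_def)
  next
    case (Suc k)
    have "(T ^\<^sub>m Suc k) $$ (a+p,b+p) = (T ^\<^sub>m k * T) $$ (a+p,b+p)" by simp
    also have "\<dots> = (\<Sum>l<p+m. (T ^\<^sub>m k) $$ (a+p,l) * T $$ (l,b+p))"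
      using T Suc.prems by (intro mult_entry[where nc="p+m"]) auto
    also have "\<dots> = (\<Sum>l<p. (T ^\<^sub>m k) $$ (a+p,l) * T $$ (l,b+p)) +
        (\<Sum>l<m. (T ^\<^sub>m k) $$ (a+p,l+p) * T $$ (l+p,b+p))"
      by (rule sum_split_add)
    also have "(\<Sum>l<p. (T ^\<^sub>m k) $$ (a+p,l) * T $$ (l,b+p)) = 0"
      using Tk_col Suc.prems N_def by (intro sum.neutral) auto
    also have "(\<Sum>l<m. (T ^\<^sub>m k) $$ (a+p,l+p) * T $$ (l+p,b+p)) =
        (\<Sum>l<m. (Z ^\<^sub>m k) $$ (a,l) * Z $$ (l,b))"
      using Suc.hyps Suc.prems Z_def by (intro sum.cong) auto
    also have "\<dots> = (Z ^\<^sub>m k * Z) $$ (a,b)"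
      using Z Suc.prems by (intro mult_entry[where nc=m, symmetric]) auto
    finally show ?case by simp
  qed
  define g where "g = pCons 0 \<chi> - \<chi>"
  have coeffg: "coeff g (Suc m) = 1" unfolding g_def using degchi by (simp add: coeff_eq_0)
  hence g0: "g \<noteq> 0" by auto
  have degg: "degree g \<le> Suc m" unfolding g_def using degchi
    by (intro degree_diff_le) (auto simp: degree_pCons_le)
  have "\<forall>i<N. \<forall>j<N. (\<Sum>k\<le>Suc m. coeff g k * (T ^\<^sub>m k) $$ (i,j)) = 0"
  proof (intro allI impI)
    fix i j assume i: "i < N" and j: "j < N"
    have inner: "(\<Sum>k\<le>m. coeff \<chi> k * (T ^\<^sub>m k) $$ (l,j)) = 0 \<or> T $$ (i,l) - (if i = l then 1 else 0) = 0"
      if l: "l < N" for l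
    proof (cases "l < p")
      case True
      then show ?thesis using col i unfolding N_def by auto
    next
      case lp: False
      show ?thesis
      proof (cases "j < p")
        case True
        then have "\<forall>k. (T ^\<^sub>m k) $$ (l,j) = 0" using Tk_col l lp by auto
        then show ?thesis by simp
      next
        case False
        obtain a b where ab: "l = a + p" "j = b + p" "a < m" "b < m"
          using l j lp False unfolding N_def by (metis add.commute le_add_diff_inverse less_diff_conv2 not_less)
        have "(\<Sum>k\<le>m. coeff \<chi> k * (T ^\<^sub>m k) $$ (l,j)) = (\<Sum>k\<le>m. coeff \<chi> k * (Z ^\<^sub>m k) $$ (a,b))"
          using ab Tk_Z by simp
        also have "\<dots> = 0" unfolding \<chi>_def by (rule cayley_hamilton_entry[OF Z ab(3,4)])
        finally show ?thesis by simp
      qed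
    qed
    have "(\<Sum>k\<le>Suc m. coeff g k * (T ^\<^sub>m k) $$ (i,j)) =
      (\<Sum>k\<le>Suc m. coeff (pCons 0 \<chi>) k * (T ^\<^sub>m k) $$ (i,j)) - (\<Sum>k\<le>Suc m. coeff \<chi> k * (T ^\<^sub>m k) $$ (i,j))"
      unfolding g_def by (simp add: left_diff_distrib sum_subtractf)
    also have "(\<Sum>k\<le>Suc m. coeff (pCons 0 \<chi>) k * (T ^\<^sub>m k) $$ (i,j)) =
        (\<Sum>k\<le>m. coeff \<chi> k * (T ^\<^sub>m (Suc k)) $$ (i,j))"
      by (subst sum.atMost_Suc_shift) simp
    also have "(\<Sum>k\<le>Suc m. coeff \<chi> k * (T ^\<^sub>m k) $$ (i,j)) = (\<Sum>k\<le>m. coeff \<chi> k * (T ^\<^sub>m k) $$ (i,j))"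
      using degchi by (simp add: coeff_eq_0)
    also have "(\<Sum>k\<le>m. coeff \<chi> k * (T ^\<^sub>m (Suc k)) $$ (i,j)) - (\<Sum>k\<le>m. coeff \<chi> k * (T ^\<^sub>m k) $$ (i,j))
       = (\<Sum>k\<le>m. \<Sum>l<N. (T $$ (i,l) - (if i = l then 1 else 0)) * (coeff \<chi> k * (T ^\<^sub>m k) $$ (l,j)))"
    proof -
      have "coeff \<chi> k * (T ^\<^sub>m (Suc k)) $$ (i,j) - coeff \<chi> k * (T ^\<^sub>m k) $$ (i,j) =
        (\<Sum>l<N. (T $$ (i,l) - (if i = l then 1 else 0)) * (coeff \<chi> k * (T ^\<^sub>m k) $$ (l,j)))" for k
      proof -
        have P1: "(T ^\<^sub>m (Suc k)) $$ (i,j) = (\<Sum>l<N. T $$ (i,l) * (T ^\<^sub>m k) $$ (l,j))"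
          unfolding pow_mat_Suc_left[OF TN] using TN i j by (intro mult_entry[where nc=N]) auto
        have P2: "(\<Sum>l<N. (if i = l then 1 else 0) * (T ^\<^sub>m k) $$ (l,j)) = (T ^\<^sub>m k) $$ (i,j)"
          using i by (subst sum.cong[OF refl, of _ _ "\<lambda>l. if i = l then (T ^\<^sub>m k) $$ (l,j) else 0"]) auto
        have "(\<Sum>l<N. (T $$ (i,l) - (if i = l then 1 else 0)) * (coeff \<chi> k * (T ^\<^sub>m k) $$ (l,j)))
          = coeff \<chi> k * (\<Sum>l<N. T $$ (i,l) * (T ^\<^sub>m k) $$ (l,j))
            - coeff \<chi> k * (\<Sum>l<N. (if i = l then 1 else 0) * (T ^\<^sub>m k) $$ (l,j))"
          by (simp only: sum_distrib_left sum_subtractf[symmetric]) (rule sum.cong, auto simp: algebra_simps)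
        thus ?thesis by (simp only: P1 P2)
      qed
      thus ?thesis by (simp add: sum_subtractf[symmetric])
    qed
    also have "\<dots> = (\<Sum>l<N. (T $$ (i,l) - (if i = l then 1 else 0)) * (\<Sum>k\<le>m. coeff \<chi> k * (T ^\<^sub>m k) $$ (l,j)))"
      by (simp add: sum_distrib_left sum.swap[of _ "{..m}"])
    also have "\<dots> = 0"
      using inner by (intro sum.neutral) (metis lessThan_iff mult_zero_left mult_zero_right)
    finally show "(\<Sum>k\<le>Suc m. coeff g k * (T ^\<^sub>m k) $$ (i,j)) = 0" .
  qed
  hence "poly_mat g T = 0\<^sub>m N N" using poly_mat_zero_iff[OF TN degg] by simp
  thus ?thesis using g0 degg unfolding N_def by auto
qed


lemma min_poly_degree_le:
  assumes M: "M \<in> carrier_mat N N" and g0: "g \<noteq> 0" and gz: "poly_mat g M = 0\<^sub>m N N"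
  shows "degree (min_poly_mat M) \<le> degree g"
proof -
  have dr: "dim_row M = N" using M by simp
  define S where "S = {h. h \<noteq> 0 \<and> poly_mat h M = 0\<^sub>m N N}"
  have gS: "g \<in> S" using g0 gz unfolding S_def by simp
  define d where "d = (LEAST d. \<exists>h\<in>S. degree h = d)"
  have ex: "\<exists>h\<in>S. degree h = d" unfolding d_def by (rule LeastI_ex) (use gS in blast)
  then obtain h0 where h0S: "h0 \<in> S" and degh0: "degree h0 = d" by blast
  have dmin: "d \<le> degree h" if "h \<in> S" for h
    unfolding d_def by (rule Least_le) (use that in blast)
  define f0 where "f0 = smult (inverse (lead_coeff h0)) h0"
  have h00: "h0 \<noteq> 0" and h0z: "poly_mat h0 M = 0\<^sub>m N N" using h0S unfolding S_def by auto
  have lf0: "lead_coeff f0 = 1" unfolding f0_def using h00 by simp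
  have degf0: "degree f0 = d" unfolding f0_def degh0[symmetric] using h00 by simp
  have f0z: "poly_mat f0 M = 0\<^sub>m N N"
  proof -
    have "\<forall>i<N. \<forall>j<N. (\<Sum>k\<le>d. coeff h0 k * (M ^\<^sub>m k) $$ (i,j)) = 0"
      using poly_mat_zero_iff[OF M, of h0 d] h0z degh0 by simp
    hence "\<forall>i<N. \<forall>j<N. (\<Sum>k\<le>d. coeff f0 k * (M ^\<^sub>m k) $$ (i,j)) = 0"
      unfolding f0_def by (simp add: mult.assoc sum_distrib_left[symmetric])
    thus ?thesis using poly_mat_zero_iff[OF M, of f0 d] degf0 by simp
  qed
  have f0S: "f0 \<in> S" using f0z lf0 unfolding S_def by auto
  define P where "P f \<longleftrightarrow> lead_coeff f = 1 \<and> poly_mat f M = 0\<^sub>m (dim_row M) (dim_row M) \<and>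
      (\<forall>g. g \<noteq> 0 \<and> poly_mat g M = 0\<^sub>m (dim_row M) (dim_row M) \<longrightarrow> degree f \<le> degree g)" for f
  have Pf0: "P f0" unfolding P_def dr using lf0 f0z degf0 dmin unfolding S_def by auto
  have uniq: "f1 = f0" if Pf1: "P f1" for f1
  proof (rule ccontr)
    assume ne: "f1 \<noteq> f0"
    have lf1: "lead_coeff f1 = 1" and f1z: "poly_mat f1 M = 0\<^sub>m N N"
      and f1min: "\<And>g. g \<noteq> 0 \<Longrightarrow> poly_mat g M = 0\<^sub>m N N \<Longrightarrow> degree f1 \<le> degree g"
      using Pf1 unfolding P_def dr by auto
    have f10: "f1 \<noteq> 0" using lf1 by auto
    have degf1: "degree f1 = d" using f1min[OF _ f0z] dmin[of f1] f10 f1z degf0 lf0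
      unfolding S_def by fastforce
    define h where "h = f1 - f0"
    have h0: "h \<noteq> 0" unfolding h_def using ne by simp
    have degh: "degree h \<le> d" unfolding h_def using degf1 degf0 by (intro degree_diff_le) auto
    have hz: "poly_mat h M = 0\<^sub>m N N"
    proof -
      have "\<forall>i<N. \<forall>j<N. (\<Sum>k\<le>d. coeff f1 k * (M ^\<^sub>m k) $$ (i,j)) = 0"
        using poly_mat_zero_iff[OF M, of f1 d] f1z degf1 by simp
      moreover have "\<forall>i<N. \<forall>j<N. (\<Sum>k\<le>d. coeff f0 k * (M ^\<^sub>m k) $$ (i,j)) = 0"
        using poly_mat_zero_iff[OF M, of f0 d] f0z degf0 by simp
      ultimately have "\<forall>i<N. \<forall>j<N. (\<Sum>k\<le>d. coeff h k * (M ^\<^sub>m k) $$ (i,j)) = 0"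
        unfolding h_def by (simp add: left_diff_distrib sum_subtractf)
      thus ?thesis using poly_mat_zero_iff[OF M, of h d] degh by simp
    qed
    have "coeff h d = 0" unfolding h_def using lf1 lf0 degf1 degf0 by simp
    hence "degree h \<noteq> d" using h0 by (metis leading_coeff_0_iff)
    hence "degree h < d" using degh by simp
    moreover have "d \<le> degree h" using dmin h0 hz unfolding S_def by auto
    ultimately show False by simp
  qed
  have "min_poly_mat M = f0"
  proof -
    have "min_poly_mat M = (THE f. P f)" unfolding min_poly_mat_def P_def by simp
    also have "\<dots> = f0" by (rule the_equality[of P, OF Pf0 uniq])
    finally show ?thesis .
  qed
  thus ?thesis using degf0 dmin gS by simp
qed


lemma Zlem: "four_block_mat (0\<^sub>m n p) (0\<^sub>m n 0) (0\<^sub>m q p) (0\<^sub>m q 0) = (0\<^sub>m (n+q) p :: real mat)"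
    by (rule eq_matI) auto
lemma block3_carrier:
  assumes "B22 \<in> carrier_mat n n"
  shows "block3 (1\<^sub>m p) B12 B13 B21 B22 B23 B31 B32 (1\<^sub>m q) \<in> carrier_mat (p+(n+q)) (p+(n+q))"
  unfolding block3_def by (intro four_block_carrier_mat one_carrier_mat assms)

lemma block3_first_cols:
  assumes D: "B22 \<in> carrier_mat n n" and i: "i < p+(n+q)" and j: "j < p"
  shows "block3 (1\<^sub>m p) B12 B13 (0\<^sub>m n p) B22 B23 (0\<^sub>m q p) B32 (1\<^sub>m q) $$ (i,j) = (if i = j then 1 else 0)"
proof -
  have C: "four_block_mat (0\<^sub>m n p) (0\<^sub>m (dim_row (0\<^sub>m n p :: real mat)) 0) (0\<^sub>m q p) (0\<^sub>m (dim_row (0\<^sub>m q p :: real mat)) 0) = (0\<^sub>m (n+q) p :: real mat)"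
    by (simp only: index_zero_mat Zlem)
  have D2: "four_block_mat B22 B23 B32 (1\<^sub>m q) \<in> carrier_mat (n+q) (n+q)"
    by (intro four_block_carrier_mat one_carrier_mat D)
  have dr: "dim_row (four_block_mat B22 B23 B32 (1\<^sub>m q)) = n+q" "dim_col (four_block_mat B22 B23 B32 (1\<^sub>m q)) = n+q"
    using D2 by auto
  show ?thesis unfolding block3_def C
    by (subst index_mat_four_block(1)) (use i j dr in auto)
qed

lemma Elem: assumes X: "X \<in> carrier_mat p n" shows "block3 (1\<^sub>m p) X (0\<^sub>m p q) (0\<^sub>m n p) Phat Y (0\<^sub>m q p) (0\<^sub>m q n) (1\<^sub>m q) =
     four_block_mat (1\<^sub>m p) (four_block_mat X (0\<^sub>m p q) (0\<^sub>m 0 n) (0\<^sub>m 0 q)) (0\<^sub>m (n+q) p)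
       (four_block_mat Phat Y (0\<^sub>m q n) (1\<^sub>m q))"
  using X unfolding block3_def by (simp only: index_zero_mat carrier_matD Zlem)
lemma block3_M_det:
  assumes X: "X \<in> carrier_mat p n" and P: "Phat \<in> carrier_mat n n" and Y: "Y \<in> carrier_mat n q"
    and dP: "det Phat \<noteq> 0"
  shows "det (block3 (1\<^sub>m p) X (0\<^sub>m p q) (0\<^sub>m n p) Phat Y (0\<^sub>m q p) (0\<^sub>m q n) (1\<^sub>m q)) \<noteq> (0::real)"
proof -
  have W: "det (four_block_mat Phat Y (0\<^sub>m q n) (1\<^sub>m q)) = det Phat"
    using det_four_block_mat_lower_left_zero[OF P Y refl one_carrier_mat] by (simp only: det_one mult_1_right)
  have X2: "four_block_mat X (0\<^sub>m p q) (0\<^sub>m 0 n) (0\<^sub>m 0 q) \<in> carrier_mat p (n+q)"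
    using four_block_carrier_mat[OF X zero_carrier_mat[of 0 q]] by simp
  have W2: "four_block_mat Phat Y (0\<^sub>m q n) (1\<^sub>m q) \<in> carrier_mat (n+q) (n+q)"
    using four_block_carrier_mat[OF P one_carrier_mat[of q]] by simp
  have "det (block3 (1\<^sub>m p) X (0\<^sub>m p q) (0\<^sub>m n p) Phat Y (0\<^sub>m q p) (0\<^sub>m q n) (1\<^sub>m q)) =
     det (1\<^sub>m p) * det (four_block_mat Phat Y (0\<^sub>m q n) (1\<^sub>m q))"
    unfolding Elem[OF X] by (rule det_four_block_mat_lower_left_zero[OF one_carrier_mat X2 refl W2])
  thus ?thesis using W dP by (simp only: det_one mult_1_left not_False_eq_True)
qed

lemma spd_det:
  assumes "sym_pos_def_mat n Phat"
  shows "det Phat \<noteq> 0"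
proof
  assume "det Phat = 0"
  have P: "Phat \<in> carrier_mat n n" using assms unfolding sym_pos_def_mat_def by auto
  obtain v where v: "v \<in> carrier_vec n" "v \<noteq> 0\<^sub>v n" "Phat *\<^sub>v v = 0\<^sub>v n"
    using det_0_iff_vec_prod_zero[OF P] \<open>det Phat = 0\<close> by auto
  have "v \<bullet> (Phat *\<^sub>v v) > 0" using assms v unfolding sym_pos_def_mat_def by auto
  moreover have "v \<bullet> (Phat *\<^sub>v v) = 0" using v by simp
  ultimately show False by simp
qed

lemma inv_mat_left:
  fixes M :: "real mat"
  assumes M: "M \<in> carrier_mat N N" and d: "det M \<noteq> 0"
  shows "inv_mat M \<in> carrier_mat N N \<and> inv_mat M * M = 1\<^sub>m N"
proof -
  have "M \<in> Units (ring_mat TYPE(real) N ())" by (rule det_non_zero_imp_unit[OF M d])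
  then obtain B where B: "B \<in> carrier_mat N N" "M * B = 1\<^sub>m N" "B * M = 1\<^sub>m N"
    unfolding Units_def ring_mat_def by auto
  have ex: "\<exists>B. B \<in> carrier_mat (dim_row M) (dim_row M) \<and> inverts_mat M B \<and> inverts_mat B M"
    using B M unfolding inverts_mat_def by (intro exI[of _ B]) auto
  have "inv_mat M \<in> carrier_mat (dim_row M) (dim_row M) \<and> inverts_mat M (inv_mat M) \<and> inverts_mat (inv_mat M) M"
    unfolding inv_mat_def by (rule someI_ex[OF ex])
  thus ?thesis using M unfolding inverts_mat_def by auto
qed

lemma main_one:
  fixes A M :: "real mat"
  assumes A: "A \<in> carrier_mat (p+m) (p+m)" and M: "M \<in> carrier_mat (p+m) (p+m)"
    and d: "det M \<noteq> 0"
    and colA: "\<And>i j. i < p+m \<Longrightarrow> j < p \<Longrightarrow> A $$ (i,j) = (if i = j then 1 else 0)"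
    and colM: "\<And>i j. i < p+m \<Longrightarrow> j < p \<Longrightarrow> M $$ (i,j) = (if i = j then 1 else 0)"
  shows "degree (min_poly_mat (inv_mat M * A)) \<le> m + 1"
proof -
  define B where "B = inv_mat M"
  have B: "B \<in> carrier_mat (p+m) (p+m)" and BM: "B * M = 1\<^sub>m (p+m)"
    using inv_mat_left[OF M d] unfolding B_def by auto
  define T where "T = B * A"
  have T: "T \<in> carrier_mat (p+m) (p+m)" unfolding T_def using B A by simp
  have colT: "T $$ (i,j) = (if i = j then 1 else 0)" if i: "i < p+m" and j: "j < p" for i j
  proof -
    have "T $$ (i,j) = (\<Sum>l<p+m. B $$ (i,l) * A $$ (l,j))"
      unfolding T_def using B A i j by (intro mult_entry[where nc="p+m"]) auto
    also have "\<dots> = (\<Sum>l<p+m. B $$ (i,l) * M $$ (l,j))"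
      using colA colM j by (intro sum.cong) auto
    also have "\<dots> = (B * M) $$ (i,j)"
      using B M i j by (intro mult_entry[where nc="p+m", symmetric]) auto
    finally show ?thesis using BM i j by simp
  qed
  obtain g where g: "g \<noteq> 0" "degree g \<le> m + 1" "poly_mat g T = 0\<^sub>m (p+m) (p+m)"
    using block_annihilator[OF T colT] by blast
  have "degree (min_poly_mat T) \<le> degree g" by (rule min_poly_degree_le[OF T g(1,3)])
  thus ?thesis using g(2) unfolding T_def B_def by simp
qed

theorem theorem6:
  fixes p n q :: nat and A1 A2 Phat :: "real mat"
  assumes A1: "A1 \<in> carrier_mat p n"
    and rankA1: "vec_space.rank p A1 = n"
    and A2: "A2 \<in> carrier_mat q n"
    and Phat: "sym_pos_def_mat n Phat"
  defines "P \<equiv> transpose_mat A1 * A1"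
  defines "\<A> \<equiv> block3 (1\<^sub>m p) A1 (0\<^sub>m p q)
                       (0\<^sub>m n p) P (transpose_mat A2)
                       (0\<^sub>m q p) A2 (1\<^sub>m q)"
    and "M1 \<equiv> block3 (1\<^sub>m p) (0\<^sub>m p n) (0\<^sub>m p q)
                    (0\<^sub>m n p) Phat (0\<^sub>m n q)
                    (0\<^sub>m q p) (0\<^sub>m q n) (1\<^sub>m q)"
    and "M2 \<equiv> block3 (1\<^sub>m p) (0\<^sub>m p n) (0\<^sub>m p q)
                    (0\<^sub>m n p) Phat (transpose_mat A2)
                    (0\<^sub>m q p) (0\<^sub>m q n) (1\<^sub>m q)"
    and "M3 \<equiv> block3 (1\<^sub>m p) A1 (0\<^sub>m p q)
                    (0\<^sub>m n p) Phat (0\<^sub>m n q)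
                    (0\<^sub>m q p) (0\<^sub>m q n) (1\<^sub>m q)"
    and "M4 \<equiv> block3 (1\<^sub>m p) A1 (0\<^sub>m p q)
                    (0\<^sub>m n p) Phat (transpose_mat A2)
                    (0\<^sub>m q p) (0\<^sub>m q n) (1\<^sub>m q)"
  shows "\<forall>M \<in> {M1, M2, M3, M4}. degree (min_poly_mat (inv_mat M * \<A>)) \<le> n + q + 1"
proof -
  have PH: "Phat \<in> carrier_mat n n" using Phat unfolding sym_pos_def_mat_def by auto
  have dP: "det Phat \<noteq> 0" using spd_det[OF Phat] .
  have PP: "P \<in> carrier_mat n n" unfolding P_def using A1 by simp
  have A2T: "transpose_mat A2 \<in> carrier_mat n q" using A2 by simp
  have Acar: "\<A> \<in> carrier_mat (p+(n+q)) (p+(n+q))"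
    unfolding \<A>_def by (rule block3_carrier[OF PP])
  have Acol: "\<And>i j. i < p+(n+q) \<Longrightarrow> j < p \<Longrightarrow> \<A> $$ (i,j) = (if i = j then 1 else 0)"
    unfolding \<A>_def by (rule block3_first_cols[OF PP])
  have gen: "degree (min_poly_mat (inv_mat (block3 (1\<^sub>m p) X (0\<^sub>m p q) (0\<^sub>m n p) Phat Y (0\<^sub>m q p) (0\<^sub>m q n) (1\<^sub>m q)) * \<A>)) \<le> n + q + 1"
    if X: "X \<in> carrier_mat p n" and Y: "Y \<in> carrier_mat n q" for X Y
  proof -
    let ?M = "block3 (1\<^sub>m p) X (0\<^sub>m p q) (0\<^sub>m n p) Phat Y (0\<^sub>m q p) (0\<^sub>m q n) (1\<^sub>m q)"
    have "degree (min_poly_mat (inv_mat ?M * \<A>)) \<le> (n + q) + 1"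
      by (rule main_one[OF Acar block3_carrier[OF PH] block3_M_det[OF X PH Y dP] Acol block3_first_cols[OF PH]])
    thus ?thesis by simp
  qed
  show ?thesis
    unfolding M1_def M2_def M3_def M4_def
    using gen[of "0\<^sub>m p n" "0\<^sub>m n q"] gen[of "0\<^sub>m p n" "transpose_mat A2"]
      gen[of A1 "0\<^sub>m n q"] gen[of A1 "transpose_mat A2"] A1 A2T by auto
qed

end
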